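(* Let $(M,\circ,\mathrm{OR})$ be a free $\mathbb{D}$-module of rank 3 with scalar product and orientation, and let $x,y,z\in M\setminus\epsilon M$ satisfy $x+y+z=0$. Then $$\alpha_{xy}+\alpha_{yz}+\alpha_{zx}=\pi.$$
   Context: $\mathbb{D}=\{a+\epsilon b: a,b\in\mathbb{R}\}$, $\epsilon^2=0$, $\mathfrak{Re}(a+\epsilon b)=a$; real-analytic functions are extended by $f(a+\epsilon b)=f(a)+\epsilon bf'(a)$. Scalar product: symmetric $\mathbb{D}$-bilinear $\circ:M\times M\to\mathbb{D}$ with $\mathfrak{Re}(x\circ x)\ge0$, equality iff $x\in\epsilon M$; orientation: one of the two classes of ordered bases under $\{b'_j=A_{jk}b_k\}\sim\{b_k\}$ iff $\det\mathfrak{Re}(A)>0$. For $x\notin\epsilon M$, $|x|:=\sqrt{x\circ x}$ (positive real part). For $x,y\in M\setminus\epsilon M$ the dual angle $\Theta_{xy}$ is the unique dual number in $\{0\}\cup((0,\pi)+\epsilon\mathbb{R})\cup\{\pi\}$ with $\cos\Theta_{xy}=\frac{x\circ y}{|x|\,|y|}$, and $\alpha_{xy}:=\pi-\Theta_{xy}$. *)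

theory Defs
  imports "HOL-Analysis.Analysis"
begin

text \<open>A dual number a + eps b is represented as Dual a b; re is the real part.\<close>
datatype dual = Dual (re: real) (du: real)

lemma dual_eq_iff: "x = y \<longleftrightarrow> re x = re y \<and> du x = du y"
  by (cases x; cases y) auto

instantiation dual :: comm_ring_1
begin
definition "0 = Dual 0 0"
definition "1 = Dual 1 0"
definition "x + y = Dual (re x + re y) (du x + du y)"
definition "x - y = Dual (re x - re y) (du x - du y)"
definition "- x = Dual (- re x) (- du x)"
definition "x * y = Dual (re x * re y) (re x * du y + du x * re y)"
instance
  by intro_classes
     (auto simp: dual_eq_iff zero_dual_def one_dual_def plus_dual_def minus_dual_def
        uminus_dual_def times_dual_def algebra_simps)
end

text \<open>Inverse / division (meaningful when the real part is nonzero).\<close>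
instantiation dual :: inverse
begin
definition "inverse x = Dual (1 / re x) (- du x / (re x)\<^sup>2)"
definition "divide x y = x * inverse (y::dual)"
instance ..
end

definition eps :: dual where "eps = Dual 0 1"

definition dual_ext :: "(real \<Rightarrow> real) \<Rightarrow> dual \<Rightarrow> dual" where
  "dual_ext f x = Dual (f (re x)) (du x * deriv f (re x))"

section \<open>Free D-module of rank 3 (coordinates w.r.t. a basis) with scalar product\<close>

definition eps_part :: "(dual^3) set" where
  "eps_part = range (\<lambda>v. eps *s v)"

definition is_scalar_product :: "(dual^3 \<Rightarrow> dual^3 \<Rightarrow> dual) \<Rightarrow> bool" where
  "is_scalar_product sp \<longleftrightarrow>
     (\<forall>x y. sp x y = sp y x) \<and>
     (\<forall>x y z. sp (x + y) z = sp x z + sp y z) \<and>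
     (\<forall>c x y. sp (c *s x) y = c * sp x y) \<and>
     (\<forall>x. re (sp x x) \<ge> 0) \<and>
     (\<forall>x. re (sp x x) = 0 \<longleftrightarrow> x \<in> eps_part)"

definition dnorm :: "(dual^3 \<Rightarrow> dual^3 \<Rightarrow> dual) \<Rightarrow> dual^3 \<Rightarrow> dual" where
  "dnorm sp x = dual_ext sqrt (sp x x)"

definition angle_range :: "dual set" where
  "angle_range = {0} \<union> {t. 0 < re t \<and> re t < pi} \<union> {Dual pi 0}"

definition dual_angle :: "(dual^3 \<Rightarrow> dual^3 \<Rightarrow> dual) \<Rightarrow> dual^3 \<Rightarrow> dual^3 \<Rightarrow> dual" where
  "dual_angle sp x y =
     (THE t. t \<in> angle_range \<and> dual_ext cos t = sp x y / (dnorm sp x * dnorm sp y))"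

definition alpha :: "(dual^3 \<Rightarrow> dual^3 \<Rightarrow> dual) \<Rightarrow> dual^3 \<Rightarrow> dual^3 \<Rightarrow> dual" where
  "alpha sp x y = Dual pi 0 - dual_angle sp x y"

end

theory Submission
  imports Defs
begin

lemma re_plus[simp]: "re (x + y) = re x + re y" by (simp add: plus_dual_def)
lemma du_plus[simp]: "du (x + y) = du x + du y" by (simp add: plus_dual_def)
lemma re_minus[simp]: "re (x - y) = re x - re y" by (simp add: minus_dual_def)
lemma du_minus[simp]: "du (x - y) = du x - du y" by (simp add: minus_dual_def)
lemma re_uminus[simp]: "re (- x) = - re x" by (simp add: uminus_dual_def)
lemma du_uminus[simp]: "du (- x) = - du x" by (simp add: uminus_dual_def)
lemma re_times[simp]: "re (x * y) = re x * re y" by (simp add: times_dual_def)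
lemma du_times[simp]: "du (x * y) = re x * du y + du x * re y" by (simp add: times_dual_def)
lemma re_zero[simp]: "re 0 = 0" by (simp add: zero_dual_def)
lemma du_zero[simp]: "du 0 = 0" by (simp add: zero_dual_def)
lemma re_one[simp]: "re 1 = 1" by (simp add: one_dual_def)
lemma du_one[simp]: "du 1 = 0" by (simp add: one_dual_def)
lemma re_eps[simp]: "re eps = 0" by (simp add: eps_def)
lemma du_eps[simp]: "du eps = 1" by (simp add: eps_def)
lemma re_inverse[simp]: "re (inverse x) = 1 / re x" by (simp add: inverse_dual_def)
lemma du_inverse[simp]: "du (inverse x) = - du x / (re x)\<^sup>2" by (simp add: inverse_dual_def)
lemma divide_dual: "x / (y::dual) = x * inverse y" by (simp add: divide_dual_def)
lemma re_ext[simp]: "re (dual_ext f x) = f (re x)" by (simp add: dual_ext_def)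
lemma du_ext[simp]: "du (dual_ext f x) = du x * deriv f (re x)" by (simp add: dual_ext_def)
lemma re_of_nat[simp]: "re (of_nat n) = of_nat n" by (induct n) auto
lemma du_of_nat[simp]: "du (of_nat n) = 0" by (induct n) auto
lemma re_numeral[simp]: "re (numeral n) = numeral n"
  by (metis of_nat_numeral re_of_nat)
lemma du_numeral[simp]: "du (numeral n) = 0"
  by (metis of_nat_numeral du_of_nat)

lemma deriv_cos[simp]: "deriv cos t = - sin t"
  by (rule DERIV_imp_deriv) (rule DERIV_cos)
lemma deriv_sin[simp]: "deriv sin t = cos t"
  by (rule DERIV_imp_deriv) (rule DERIV_sin)
lemma deriv_sqrt: "0 < t \<Longrightarrow> deriv sqrt t = inverse (sqrt t) / 2"
  by (rule DERIV_imp_deriv) (rule DERIV_real_sqrt)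

lemma dual_cancel: "re M \<noteq> 0 \<Longrightarrow> A * M = B * M \<Longrightarrow> A = (B::dual)"
  by (auto simp: dual_eq_iff)

lemma dual_mult_inv: "re M \<noteq> 0 \<Longrightarrow> A * inverse M * M = A"
  by (simp add: dual_eq_iff field_simps power2_eq_square)

lemma dsqrt_sq: "re P > 0 \<Longrightarrow> dual_ext sqrt P * dual_ext sqrt P = P"
  by (simp add: dual_eq_iff deriv_sqrt field_simps)

lemma sq_unique: "re X > 0 \<Longrightarrow> re Y > 0 \<Longrightarrow> X * X = Y * Y \<Longrightarrow> X = (Y::dual)"
proof -
  assume a: "re X > 0" "re Y > 0" "X * X = Y * Y"
  have "re X * re X = re Y * re Y" using a(3) by (metis re_times)
  hence r: "re X = re Y" using a(1,2)
    by (metis abs_of_pos power2_eq_square real_sqrt_abs)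
  have "du (X*X) = du (Y*Y)" using a(3) by simp
  hence "2 * re X * du X = 2 * re Y * du Y" by (simp add: algebra_simps)
  hence "du X = du Y" using r a(1) by simp
  with r show ?thesis by (simp add: dual_eq_iff)
qed

lemma cos_add_dual: "dual_ext cos (s + t) = dual_ext cos s * dual_ext cos t - dual_ext sin s * dual_ext sin t"
  by (simp add: dual_eq_iff cos_add sin_add algebra_simps)

lemma sin_add_dual: "dual_ext sin (s + t) = dual_ext sin s * dual_ext cos t + dual_ext cos s * dual_ext sin t"
  by (simp add: dual_eq_iff cos_add sin_add algebra_simps)

lemma sin_cos_dual: "dual_ext sin t * dual_ext sin t = 1 - dual_ext cos t * dual_ext cos t"
proof -
  have "sin (re t) * sin (re t) = 1 - cos (re t) * cos (re t)"
    using sin_cos_squared_add[of "re t"] by (simp add: power2_eq_square)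
  thus ?thesis by (simp add: dual_eq_iff algebra_simps)
qed


lemma angle_nondeg:
  assumes c: "\<bar>re C\<bar> < 1"
  defines "T \<equiv> (THE t. t \<in> angle_range \<and> dual_ext cos t = C)"
  shows "dual_ext cos T = C \<and> 0 < re T \<and> re T < pi"
proof -
  have cb: "-1 < re C" "re C < 1" using c by auto
  have ab: "0 < arccos (re C)" "arccos (re C) < pi" using arccos_lt_bounded[OF cb] by auto
  have sp: "sin (arccos (re C)) > 0" using ab sin_gt_zero by blast
  define t0 where "t0 = Dual (arccos (re C)) (- du C / sin (arccos (re C)))"
  have P0: "t0 \<in> angle_range \<and> dual_ext cos t0 = C"
    using ab sp cb by (simp add: t0_def angle_range_def dual_eq_iff)
  have U: "t = t0" if "t \<in> angle_range \<and> dual_ext cos t = C" for t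
  proof -
    have ct: "cos (re t) = re C" "du t * (- sin (re t)) = du C"
      using that by (auto simp: dual_eq_iff)
    have "t \<noteq> 0" using ct cb by auto
    moreover have "t \<noteq> Dual pi 0" using ct cb by auto
    ultimately have r: "0 < re t" "re t < pi" using that by (auto simp: angle_range_def)
    have "re t = arccos (re C)" using arccos_cos[of "re t"] r ct by auto
    moreover have "sin (re t) > 0" using r sin_gt_zero by blast
    ultimately show ?thesis using ct by (simp add: t0_def dual_eq_iff field_simps)
  qed
  have "T = t0" unfolding T_def using P0 U by (rule the_equality)
  thus ?thesis using P0 ab by (simp add: t0_def)
qed

lemma angle_one: "(THE t. t \<in> angle_range \<and> dual_ext cos t = 1) = 0"
proof (rule the_equality)
  show "0 \<in> angle_range \<and> dual_ext cos 0 = 1" by (simp add: angle_range_def dual_eq_iff)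
  fix t assume a: "t \<in> angle_range \<and> dual_ext cos t = 1"
  hence ct: "cos (re t) = 1" by (auto simp: dual_eq_iff)
  show "t = 0"
  proof (rule ccontr)
    assume "t \<noteq> 0"
    moreover have "t \<noteq> Dual pi 0" using ct by auto
    ultimately have r: "0 < re t" "re t < pi" using a by (auto simp: angle_range_def)
    have "re t = arccos 1" using arccos_cos[of "re t"] r ct by auto
    thus False using r by simp
  qed
qed

lemma angle_mone: "(THE t. t \<in> angle_range \<and> dual_ext cos t = -1) = Dual pi 0"
proof (rule the_equality)
  show "Dual pi 0 \<in> angle_range \<and> dual_ext cos (Dual pi 0) = -1" by (simp add: angle_range_def dual_eq_iff)
  fix t assume a: "t \<in> angle_range \<and> dual_ext cos t = -1"
  hence ct: "cos (re t) = -1" by (auto simp: dual_eq_iff)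
  show "t = Dual pi 0"
  proof (rule ccontr)
    assume "t \<noteq> Dual pi 0"
    moreover have "t \<noteq> 0" using ct by auto
    ultimately have r: "0 < re t" "re t < pi" using a by (auto simp: angle_range_def)
    have "re t = arccos (-1)" using arccos_cos[of "re t"] r ct by auto
    thus False using r by simp
  qed
qed


context
  fixes sp :: "dual^3 \<Rightarrow> dual^3 \<Rightarrow> dual"
  assumes SP: "is_scalar_product sp"
begin

lemma sp_sym: "sp x y = sp y x" using SP unfolding is_scalar_product_def by blast
lemma sp_add_l[simp]: "sp (x + y) z = sp x z + sp y z" using SP unfolding is_scalar_product_def by blast
lemma sp_add_r[simp]: "sp z (x + y) = sp z x + sp z y" using sp_sym sp_add_l by metis
lemma sp_smult_l[simp]: "sp (c *s x) y = c * sp x y" using SP unfolding is_scalar_product_def by blast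
lemma sp_smult_r[simp]: "sp y (c *s x) = c * sp y x" using sp_sym sp_smult_l by metis
lemma sp_uminus_l[simp]: "sp (- x) y = - sp x y"
proof -
  have "- x = (-1) *s x" by (simp add: vec_eq_iff)
  thus ?thesis by simp
qed
lemma sp_uminus_r[simp]: "sp y (- x) = - sp y x" using sp_sym sp_uminus_l by metis
lemma sp_diff_l[simp]: "sp (x - y) z = sp x z - sp y z"
  using sp_add_l[of x "- y" z] by simp
lemma sp_diff_r[simp]: "sp z (x - y) = sp z x - sp z y"
  using sp_sym sp_diff_l by metis
lemma sp_nonneg: "re (sp x x) \<ge> 0" using SP unfolding is_scalar_product_def by blast
lemma sp_eps: "re (sp x x) = 0 \<longleftrightarrow> x \<in> eps_part" using SP unfolding is_scalar_product_def by blast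
lemma sp_pos: "x \<notin> eps_part \<Longrightarrow> re (sp x x) > 0"
  using sp_nonneg[of x] sp_eps[of x] by linarith

definition gram where "gram x y = sp x x * sp y y - sp x y * sp x y"

lemma gram_facts:
  assumes x: "x \<notin> eps_part"
  shows "re (gram x y) \<ge> 0" and "re (gram x y) = 0 \<Longrightarrow> gram x y = 0"
proof -
  define p where "p = re (sp x x)"
  have p: "p > 0" using sp_pos[OF x] by (simp add: p_def)
  define l where "l = re (sp x y) / p"
  define v where "v = y - Dual l 0 *s x"
  have "re (sp v v) = re (sp y y) - 2 * l * re (sp x y) + l * l * p"
    by (simp add: v_def p_def sp_sym[of y x] algebra_simps)
  also have "\<dots> = re (gram x y) / p"
    using p by (simp add: gram_def l_def p_def field_simps power2_eq_square)
  finally have e: "re (sp v v) = re (gram x y) / p" .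
  show "re (gram x y) \<ge> 0" using sp_nonneg[of v] e p
    by (simp add: divide_nonneg_pos zero_le_divide_iff)
  assume "re (gram x y) = 0"
  hence "v \<in> eps_part" using e sp_eps by simp
  then obtain w where w: "v = eps *s w" by (auto simp: eps_part_def)
  have y: "y = Dual l 0 *s x + eps *s w" using w by (simp add: v_def algebra_simps)
  show "gram x y = 0"
    unfolding gram_def y by (simp add: dual_eq_iff sp_sym[of w x] algebra_simps)
qed

lemma dnorm_pos: "x \<notin> eps_part \<Longrightarrow> re (dnorm sp x) > 0"
  using sp_pos by (simp add: dnorm_def)

lemma dnorm_sq: "x \<notin> eps_part \<Longrightarrow> dnorm sp x * dnorm sp x = sp x x"
  using sp_pos dsqrt_sq by (simp add: dnorm_def)

lemma angle_sym: "dual_angle sp x y = dual_angle sp y x"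
  by (simp add: dual_angle_def sp_sym[of x y] mult.commute)


lemma angle_deg:
  assumes x: "x \<notin> eps_part" and y: "y \<notin> eps_part" and g: "gram x y = 0"
  shows "re (sp x y) \<noteq> 0 \<and> dual_angle sp x y = (if re (sp x y) > 0 then 0 else Dual pi 0)"
proof -
  define N where "N = dnorm sp x * dnorm sp y"
  have Np: "re N > 0" using dnorm_pos[OF x] dnorm_pos[OF y] by (simp add: N_def)
  define C where "C = sp x y / N"
  have CN: "C * N = sp x y" unfolding C_def divide_dual using dual_mult_inv Np by simp
  have NN: "N * N = sp x x * sp y y"
  proof -
    have "N * N = (dnorm sp x * dnorm sp x) * (dnorm sp y * dnorm sp y)" by (simp add: N_def algebra_simps)
    thus ?thesis using dnorm_sq[OF x] dnorm_sq[OF y] by simp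
  qed
  have "(C * C) * (N * N) = 1 * (N * N)"
  proof -
    have "(C * C) * (N * N) = (C * N) * (C * N)" by (simp add: algebra_simps)
    also have "\<dots> = sp x x * sp y y" using CN g by (simp add: gram_def)
    finally show ?thesis using NN by simp
  qed
  hence CC: "C * C = 1" using dual_cancel[of "N*N"] Np by simp
  hence r: "re C * re C = 1" and d: "2 * re C * du C = 0"
    by (metis re_one re_times, metis du_one du_times mult.commute mult_2 distrib_right mult.assoc)
  have rc: "re C \<noteq> 0" using r by auto
  have duC: "du C = 0" using d rc by simp
  have rC: "re C = 1 \<or> re C = -1" using r by (metis mult_cancel_left1 square_eq_1_iff)
  have rel: "re C * re N = re (sp x y)" using CN by (metis re_times)
  show ?thesis
  proof (cases "re (sp x y) > 0")
    case True
    hence "re C > 0" using rel Np by (metis zero_less_mult_pos2)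
    hence "C = 1" using rC duC by (auto simp: dual_eq_iff)
    thus ?thesis using True angle_one unfolding dual_angle_def C_def N_def by simp
  next
    case False
    hence "re C \<le> 0" using rel Np by (metis mult_pos_pos not_less)
    hence "C = -1" using rC duC by (auto simp: dual_eq_iff)
    moreover have "re (sp x y) \<noteq> 0" using rel Np rc by (metis mult_eq_0_iff order_less_irrefl)
    ultimately show ?thesis using False angle_mone unfolding dual_angle_def C_def N_def by simp
  qed
qed

lemma angle_nd:
  assumes x: "x \<notin> eps_part" and y: "y \<notin> eps_part" and g: "re (gram x y) > 0"
  defines "T \<equiv> dual_angle sp x y"
  shows "dual_ext cos T * (dnorm sp x * dnorm sp y) = sp x y \<and> 0 < re T \<and> re T < pi \<and>
    (dual_ext sin T * (dnorm sp x * dnorm sp y)) * (dual_ext sin T * (dnorm sp x * dnorm sp y)) = gram x y \<and>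
    re (dual_ext sin T * (dnorm sp x * dnorm sp y)) > 0"
proof -
  define N where "N = dnorm sp x * dnorm sp y"
  have Np: "re N > 0" using dnorm_pos[OF x] dnorm_pos[OF y] by (simp add: N_def)
  define C where "C = sp x y / N"
  have CN: "C * N = sp x y" unfolding C_def divide_dual using dual_mult_inv Np by simp
  have NN: "N * N = sp x x * sp y y"
  proof -
    have "N * N = (dnorm sp x * dnorm sp x) * (dnorm sp y * dnorm sp y)" by (simp add: N_def algebra_simps)
    thus ?thesis using dnorm_sq[OF x] dnorm_sq[OF y] by simp
  qed
  have "re (C * N) * re (C * N) < re (N * N)" using CN NN g by (simp add: gram_def)
  hence "(re C * re C) * (re N * re N) < 1 * (re N * re N)" by (simp add: algebra_simps)
  hence "re C * re C < 1" using Np by (metis mult_less_cancel_right_pos mult_pos_pos)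
  hence c: "\<bar>re C\<bar> < 1" using abs_square_less_1[of "re C"] by (simp add: power2_eq_square)
  have A: "dual_ext cos T = C \<and> 0 < re T \<and> re T < pi"
    using angle_nondeg[OF c] unfolding T_def dual_angle_def C_def N_def by simp
  have "(dual_ext sin T * N) * (dual_ext sin T * N) = (dual_ext sin T * dual_ext sin T) * (N * N)"
    by (simp add: algebra_simps)
  also have "\<dots> = N * N - (C * N) * (C * N)" using A by (simp add: sin_cos_dual algebra_simps)
  also have "\<dots> = gram x y" using CN NN by (simp add: gram_def)
  finally have S: "(dual_ext sin T * N) * (dual_ext sin T * N) = gram x y" .
  have "re (dual_ext sin T * N) > 0" using A Np sin_gt_zero by simp
  thus ?thesis using A CN S unfolding N_def by simp
qed

end

theorem proposition20:
  fixes sp :: "dual^3 \<Rightarrow> dual^3 \<Rightarrow> dual" and x y z :: "dual^3"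
  assumes "is_scalar_product sp"
    and "x \<notin> eps_part" and "y \<notin> eps_part" and "z \<notin> eps_part"
    and "x + y + z = 0"
  shows "alpha sp x y + alpha sp y z + alpha sp z x = Dual pi 0"
proof -
  note SP = assms(1)
  have x: "x \<notin> eps_part" and y: "y \<notin> eps_part" and z: "z \<notin> eps_part" using assms by auto
  have zd: "z = - x - y" using assms(5) by (simp add: algebra_simps eq_neg_iff_add_eq_0)
  have Pyz: "sp y z = - sp x y - sp y y" using SP by (simp add: zd sp_sym[OF SP, of y x])
  have Pzx: "sp z x = - sp x x - sp x y" using SP by (simp add: zd sp_sym[OF SP, of y x])
  have Pzz: "sp z z = sp x x + 2 * sp x y + sp y y" using SP by (simp add: zd sp_sym[OF SP, of y x] algebra_simps)
  have G2: "gram sp y z = gram sp x y" by (simp add: gram_def[OF SP] Pyz Pzz sp_sym[OF SP, of z y] algebra_simps power2_eq_square)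
  have G3: "gram sp z x = gram sp x y" by (simp add: gram_def[OF SP] Pzx Pzz algebra_simps power2_eq_square)
  show ?thesis
  proof (cases "re (gram sp x y) = 0")
    case True
    hence g0: "gram sp x y = 0" using gram_facts[OF SP x] by blast
    define p where "p = re (sp x x)"
    define q where "q = re (sp y y)"
    define r where "r = re (sp x y)"
    have p: "p > 0" and q: "q > 0" using sp_pos[OF SP x] sp_pos[OF SP y] by (auto simp: p_def q_def)
    have rr: "r * r = p * q" using True by (simp add: gram_def[OF SP] p_def q_def r_def)
    have g2: "gram sp y z = 0" using G2 g0 by simp
    have g3: "gram sp z x = 0" using G3 g0 by simp
    note D1 = angle_deg[OF SP x y g0] and D2 = angle_deg[OF SP y z g2] and D3 = angle_deg[OF SP z x g3]
    have r2: "re (sp y z) = - r - q" and r3: "re (sp z x) = - p - r"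
      using Pyz Pzx by (auto simp: p_def q_def r_def)
    have n1: "r \<noteq> 0" and n2: "- r - q \<noteq> 0" and n3: "- p - r \<noteq> 0"
      using D1 D2 D3 r2 r3 by (auto simp: r_def)
    have s: "(r > 0 \<and> - r - q < 0 \<and> - p - r < 0) \<or> (r < 0 \<and> - r - q > 0 \<and> - p - r < 0)
        \<or> (r < 0 \<and> - r - q < 0 \<and> - p - r > 0)"
    proof (cases "r > 0")
      case True thus ?thesis using p q by auto
    next
      case False
      hence rn: "r < 0" using n1 by auto
      have "\<not> (- r - q > 0 \<and> - p - r > 0)"
      proof
        assume "- r - q > 0 \<and> - p - r > 0"
        hence "q < - r" "p < - r" by auto
        hence "q * p < (- r) * (- r)" using p q by (metis mult_strict_mono' less_eq_real_def)
        thus False using rr by (simp add: mult.commute)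
      qed
      moreover have "\<not> (- r - q < 0 \<and> - p - r < 0)"
      proof
        assume "- r - q < 0 \<and> - p - r < 0"
        hence "- r < q" "- r < p" by auto
        hence "(- r) * (- r) < q * p" using rn by (metis mult_strict_mono' less_eq_real_def neg_0_less_iff_less)
        thus False using rr by (simp add: mult.commute)
      qed
      ultimately show ?thesis using rn n2 n3 by (meson linorder_neqE_linordered_idom)
    qed
    have e1: "dual_angle sp x y = (if r > 0 then 0 else Dual pi 0)" using D1 by (simp add: r_def)
    have e2: "dual_angle sp y z = (if - r - q > 0 then 0 else Dual pi 0)" using D2 r2 by simp
    have e3: "dual_angle sp z x = (if - p - r > 0 then 0 else Dual pi 0)" using D3 r3 by simp
    show ?thesis unfolding alpha_def e1 e2 e3 using s by (auto simp: dual_eq_iff)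
  next
    case False
    hence gp: "re (gram sp x y) > 0" using gram_facts[OF SP x] by (simp add: less_le)
    have gp2: "re (gram sp y z) > 0" and gp3: "re (gram sp z x) > 0" using gp G2 G3 by auto
    define Nx where "Nx = dnorm sp x"
    define Ny where "Ny = dnorm sp y"
    define Nz where "Nz = dnorm sp z"
    define T1 where "T1 = dual_angle sp x y"
    define T2 where "T2 = dual_angle sp y z"
    define T3 where "T3 = dual_angle sp z x"
    define c1 where "c1 = dual_ext cos T1"
    define c2 where "c2 = dual_ext cos T2"
    define c3 where "c3 = dual_ext cos T3"
    define s1 where "s1 = dual_ext sin T1"
    define s2 where "s2 = dual_ext sin T2"
    define s3 where "s3 = dual_ext sin T3"
    note A1 = angle_nd[OF SP x y gp, folded Nx_def Ny_def T1_def c1_def s1_def]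
    note A2 = angle_nd[OF SP y z gp2, folded Nz_def Ny_def T2_def c2_def s2_def]
    note A3 = angle_nd[OF SP z x gp3, folded Nx_def Nz_def T3_def c3_def s3_def]
    define K where "K = s1 * (Nx * Ny)"
    have KK: "K * K = gram sp x y" using A1 by (simp add: K_def)
    have Kp: "re K > 0" using A1 by (simp add: K_def)
    have K2: "s2 * (Ny * Nz) = K" using A2 G2 KK Kp sq_unique by metis
    have K3: "s3 * (Nz * Nx) = K" using A3 G3 KK Kp sq_unique by metis
    have NyNy: "Ny * Ny = sp y y" using dnorm_sq[OF SP y] by (simp add: Ny_def)
    define M where "M = Nx * Ny * Ny * Nz"
    have Mp: "re M \<noteq> 0" using dnorm_pos[OF SP x] dnorm_pos[OF SP y] dnorm_pos[OF SP z]
      by (simp add: M_def Nx_def Ny_def Nz_def)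
    have "(c1 * c2 - s1 * s2) * M = (c1 * (Nx * Ny)) * (c2 * (Ny * Nz)) - (s1 * (Nx * Ny)) * (s2 * (Ny * Nz))"
      by (simp add: M_def algebra_simps)
    also have "\<dots> = sp x y * sp y z - gram sp x y" using A1 A2 K2 KK by (simp add: K_def)
    also have "\<dots> = sp z x * sp y y" by (simp add: gram_def[OF SP] Pyz Pzx algebra_simps)
    also have "\<dots> = (c3 * (Nz * Nx)) * (Ny * Ny)" using A3 NyNy by simp
    also have "\<dots> = c3 * M" by (simp add: M_def algebra_simps)
    finally have CE: "c1 * c2 - s1 * s2 = c3" using dual_cancel[OF Mp] by blast
    have "(s1 * c2 + c1 * s2) * M = (s1 * (Nx * Ny)) * (c2 * (Ny * Nz)) + (c1 * (Nx * Ny)) * (s2 * (Ny * Nz))"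
      by (simp add: M_def algebra_simps)
    also have "\<dots> = K * (sp y z + sp x y)" using A1 A2 K2 by (simp add: K_def algebra_simps)
    also have "\<dots> = - (K * (Ny * Ny))" using NyNy by (simp add: Pyz)
    also have "\<dots> = - ((s3 * (Nz * Nx)) * (Ny * Ny))" using K3 by simp
    also have "\<dots> = - (s3 * M)" by (simp add: M_def algebra_simps)
    also have "\<dots> = (- s3) * M" by simp
    finally have SE: "s1 * c2 + c1 * s2 = - s3" using dual_cancel[OF Mp] by blast
    have cT: "dual_ext cos (T1 + T2) = c3" using CE cos_add_dual by (simp add: c1_def c2_def s1_def s2_def)
    have sT: "dual_ext sin (T1 + T2) = - s3" using SE sin_add_dual by (simp add: c1_def c2_def s1_def s2_def)
    define a1 where "a1 = re T1"
    define a2 where "a2 = re T2"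
    define a3 where "a3 = re T3"
    have ra: "0 < a1" "a1 < pi" "0 < a2" "a2 < pi" "0 < a3" "a3 < pi"
      using A1 A2 A3 by (auto simp: a1_def a2_def a3_def)
    have ec: "cos (a1 + a2) = cos a3" using arg_cong[OF cT, of re] by (simp add: c3_def a1_def a2_def a3_def)
    have es: "sin (a1 + a2) = - sin a3" using arg_cong[OF sT, of re] by (simp add: s3_def a1_def a2_def a3_def)
    have ed: "(du T1 + du T2) * (- sin (a1 + a2)) = du T3 * (- sin a3)"
      using arg_cong[OF cT, of du] by (simp add: c3_def a1_def a2_def a3_def)
    have s3p: "sin a3 > 0" using ra sin_gt_zero by blast
    have big: "pi < a1 + a2"
    proof (rule ccontr)
      assume "\<not> pi < a1 + a2"
      hence "sin (a1 + a2) \<ge> 0" using ra sin_ge_zero by simp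
      thus False using es s3p by simp
    qed
    have "cos (a1 + a2 - pi) = cos (pi - a3)" using ec by (simp add: cos_diff)
    hence "arccos (cos (a1 + a2 - pi)) = arccos (cos (pi - a3))" by simp
    moreover have "arccos (cos (a1 + a2 - pi)) = a1 + a2 - pi"
      using ra big by (intro arccos_cos) auto
    moreover have "arccos (cos (pi - a3)) = pi - a3"
      using ra by (intro arccos_cos) auto
    ultimately have asum: "a1 + a2 + a3 = 2 * pi" by simp
    have "(du T1 + du T2) * sin a3 = - du T3 * sin a3" using ed es by simp
    hence "(du T1 + du T2 + du T3) * sin a3 = 0" by (simp add: algebra_simps)
    hence dsum: "du T1 + du T2 + du T3 = 0" using s3p by simp
    show ?thesis unfolding alpha_def T1_def[symmetric] T2_def[symmetric] T3_def[symmetric]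
      using asum dsum by (simp add: dual_eq_iff a1_def a2_def a3_def algebra_simps)
  qed
qed

end
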